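(* Let $\ell\in\mathbb{N}$, $\alpha\in(0,1)\cup(1,2)$, $p\in(0,1)$. Let $C_1>0$ be a constant such that $\Re(y^{\alpha,p}_\gamma(t))\le-C_1|t|^\alpha$ and $|y^{\alpha,p}_\gamma(t)|\le C_1|t|^\alpha$ for all $\gamma\in(q,1]$, $t\in\mathbb{R}$, and let $C_2>0$ be such that $|x_n^{\alpha,p}(t)|/n\le\frac12$ for all $n$ and $|t|\le C_2n^{1/\alpha}$. Then there exist $C_{4,\ell}^{\alpha,p}>0$ and $\varepsilon\in(0,C_2]$ such that for all $n\in\mathbb{N}$ and $|t|\le\varepsilon n^{1/\alpha}$, \[|R^{\alpha,p}_{n,2,\ell}(t)|\le\begin{cases}C_{4,\ell}^{\alpha,p}\,|t|^{2\ell\alpha}e^{C_1|t|^\alpha/2}\,n^{-\ell}, & 0<\alpha<1,\\ C_{4,\ell}^{\alpha,p}\,|t|^{2\ell}e^{C_1|t|^\alpha/2}\,n^{-\ell(2-\alpha)/\alpha}, & 1<\alpha<2.\end{cases}\]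
   Context: Let $p\in(0,1)$, $q=1-p$, $r=1/q$. $\mathbf{f}_{\alpha,p}(t)=\sum_{k\ge1}e^{\mathrm{i}tr^{k/\alpha}}q^{k-1}p$, $x_n^{\alpha,p}(t)=n(\mathbf{f}_{\alpha,p}(t/n^{1/\alpha})-1)$, $\gamma_n=n/r^{\lceil\log_rn\rceil}$. For $\gamma\in(q,1]$: if $\alpha\in(0,1)$, $y_\gamma^{\alpha,p}(t)=\sum_{k\in\mathbb{Z}}(\exp\{\mathrm{i}tr^{k/\alpha}/\gamma^{1/\alpha}\}-1)\frac{p\gamma}{qr^k}$; if $\alpha\in(1,2)$, $y_\gamma^{\alpha,p}(t)=\sum_{k\in\mathbb{Z}}(\exp\{\mathrm{i}tr^{k/\alpha}/\gamma^{1/\alpha}\}-1-\mathrm{i}tr^{k/\alpha}/\gamma^{1/\alpha})\frac{p\gamma}{qr^k}$ (constants $C_1,C_2$ as in the claim exist). Define $R^{\alpha,p}_{n,1,2}(t)=-\sum_{m=\lceil\log_rn\rceil}^\infty\big(\exp\{\mathrm{i}t/(r^{m/\alpha}\gamma_n^{1/\alpha})\}-1-\mathrm{i}t/(r^{m/\alpha}\gamma_n^{1/\alpha})\big)\frac{p\gamma_n}{q}r^m$; for $|t|\le C_2n^{1/\alpha}$, $R^{\alpha,p}_{n,3,2}(t)=\sum_{j\ge2}\frac{(-1)^{j+1}}{j}\frac{[x_n^{\alpha,p}(t)]^j}{n^{j-1}}$ and $R^{\alpha,p}_{n,2,\ell}(t)=\sum_{j=\ell}^\infty\frac1{j!}[R^{\alpha,p}_{n,1,2}(t)+R^{\alpha,p}_{n,3,2}(t)]^j$.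 *)

theory Defs
  imports "HOL-Analysis.Analysis"
begin

definition qq :: "real \<Rightarrow> real" where "qq p = 1 - p"
definition rr :: "real \<Rightarrow> real" where "rr p = 1 / (1 - p)"

text \<open>f_{alpha,p}(t) = sum_{k>=1} exp(i t r^(k/alpha)) q^(k-1) p  (index shifted k = j+1)\<close>
definition fchar :: "real \<Rightarrow> real \<Rightarrow> real \<Rightarrow> complex" where
  "fchar alpha p t = (\<Sum>j. exp (\<i> * complex_of_real (t * rr p powr (real (j + 1) / alpha)))
                          * complex_of_real (qq p ^ j * p))"

definition xn :: "real \<Rightarrow> real \<Rightarrow> nat \<Rightarrow> real \<Rightarrow> complex" where
  "xn alpha p n t = of_nat n * (fchar alpha p (t / real n powr (1 / alpha)) - 1)"

definition Mn :: "real \<Rightarrow> nat \<Rightarrow> int" where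
  "Mn p n = \<lceil>log (rr p) (real n)\<rceil>"

definition gam :: "real \<Rightarrow> nat \<Rightarrow> real" where
  "gam p n = real n / rr p powr real_of_int (Mn p n)"

definition ygam :: "real \<Rightarrow> real \<Rightarrow> real \<Rightarrow> real \<Rightarrow> complex" where
  "ygam alpha p g t =
     (if alpha < 1 then
        (\<Sum>\<^sub>\<infinity>k::int. (exp (\<i> * complex_of_real (t * rr p powr (real_of_int k / alpha) / g powr (1 / alpha))) - 1)
                      * complex_of_real (p * g / (qq p * rr p powr real_of_int k)))
      else
        (\<Sum>\<^sub>\<infinity>k::int. (exp (\<i> * complex_of_real (t * rr p powr (real_of_int k / alpha) / g powr (1 / alpha))) - 1
                        - \<i> * complex_of_real (t * rr p powr (real_of_int k / alpha) / g powr (1 / alpha)))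
                      * complex_of_real (p * g / (qq p * rr p powr real_of_int k))))"

text \<open>R_{n,1,2}: sum over integers m >= ceiling(log_r n) (written m = Mn + j)\<close>
definition R12 :: "real \<Rightarrow> real \<Rightarrow> nat \<Rightarrow> real \<Rightarrow> complex" where
  "R12 alpha p n t =
     - (\<Sum>j. (let m = real_of_int (Mn p n) + real j;
                  u = t / (rr p powr (m / alpha) * gam p n powr (1 / alpha))
              in (exp (\<i> * complex_of_real u) - 1 - \<i> * complex_of_real u)
                 * complex_of_real (p * gam p n / qq p * rr p powr m)))"

definition R32 :: "real \<Rightarrow> real \<Rightarrow> nat \<Rightarrow> real \<Rightarrow> complex" where
  "R32 alpha p n t =
     (\<Sum>j. complex_of_real ((-1) ^ (j + 3) / real (j + 2))
           * (xn alpha p n t) ^ (j + 2) / of_nat n ^ (j + 1))"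

definition R2 :: "real \<Rightarrow> real \<Rightarrow> nat \<Rightarrow> nat \<Rightarrow> real \<Rightarrow> complex" where
  "R2 alpha p n l t =
     (\<Sum>j. (R12 alpha p n t + R32 alpha p n t) ^ (j + l) / of_nat (fact (j + l)))"

end

theory Submission
  imports Defs "HOL-Probability.Characteristic_Functions"
begin


lemma geom_reindex:
  fixes \<rho> :: real
  assumes "0 \<le> \<rho>" "\<rho> < 1" "finite S" "inj_on h S"
  shows "(\<Sum>j\<in>S. \<rho> ^ h j) \<le> 1 / (1 - \<rho>)"
proof -
  have "(\<Sum>j\<in>S. \<rho> ^ h j) = (\<Sum>i\<in>h ` S. \<rho> ^ i)"
    using sum.reindex[OF assms(4), of "\<lambda>i. \<rho> ^ i"] by simp
  also have "\<dots> \<le> (\<Sum>i. \<rho> ^ i)"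
    by (rule sum_le_suminf) (use assms in auto)
  also have "\<dots> = 1 / (1 - \<rho>)" using assms by (simp add: suminf_geometric)
  finally show ?thesis .
qed

lemma geom_two_sided:
  fixes \<rho> \<tau> :: real
  assumes "0 < \<rho>" "\<rho> < 1"
  shows "(\<Sum>j<N. \<rho> powr \<bar>real j - \<tau>\<bar>) \<le> 2 / (1 - \<rho>)"
proof -
  define A where "A = {j\<in>{..<N}. real j \<le> \<tau>}"
  define B where "B = {j\<in>{..<N}. \<not> real j \<le> \<tau>}"
  have fin: "finite A" "finite B" by (auto simp: A_def B_def)
  have "(\<Sum>j<N. \<rho> powr \<bar>real j - \<tau>\<bar>) = (\<Sum>j\<in>A. \<rho> powr \<bar>real j - \<tau>\<bar>) + (\<Sum>j\<in>B. \<rho> powr \<bar>real j - \<tau>\<bar>)"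
  proof -
    have "{..<N} = A \<union> B" "A \<inter> B = {}" by (auto simp: A_def B_def)
    then show ?thesis using fin by (simp add: sum.union_disjoint)
  qed
  also have "(\<Sum>j\<in>A. \<rho> powr \<bar>real j - \<tau>\<bar>) \<le> 1 / (1 - \<rho>)"
  proof -
    define k where "k = nat \<lfloor>\<tau>\<rfloor>"
    have jk: "j \<le> k" if "j \<in> A" for j
      using that unfolding A_def k_def by (auto simp: le_nat_iff le_floor_iff)
    have "(\<Sum>j\<in>A. \<rho> powr \<bar>real j - \<tau>\<bar>) \<le> (\<Sum>j\<in>A. \<rho> ^ (k - j))"
    proof (rule sum_mono)
      fix j assume j: "j \<in> A"
      then have "real j \<le> \<tau>" by (auto simp: A_def)
      have "real (k - j) \<le> \<tau> - real j" using jk[OF j] unfolding k_def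
        by (simp add: of_nat_diff) (metis \<open>real j \<le> \<tau>\<close> floor_le_iff le_floor_iff linorder_not_le nat_0_le of_int_of_nat_eq of_nat_0_le_iff order.trans of_int_floor_le)
      then have "\<rho> powr (\<tau> - real j) \<le> \<rho> powr real (k - j)"
        using assms by (intro powr_mono') auto
      moreover have "\<bar>real j - \<tau>\<bar> = \<tau> - real j" using \<open>real j \<le> \<tau>\<close> by linarith
      moreover have "\<rho> ^ (k - j) = \<rho> powr real (k - j)" using assms by (simp add: powr_realpow)
      ultimately show "\<rho> powr \<bar>real j - \<tau>\<bar> \<le> \<rho> ^ (k - j)" by simp
    qed
    also have "\<dots> \<le> 1 / (1 - \<rho>)"
      using assms fin by (intro geom_reindex) (auto simp: inj_on_def, metis diff_diff_cancel jk)
    finally show ?thesis .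
  qed
  also have "(\<Sum>j\<in>B. \<rho> powr \<bar>real j - \<tau>\<bar>) \<le> 1 / (1 - \<rho>)"
  proof -
    define m where "m = nat (\<lfloor>\<tau>\<rfloor> + 1)"
    have mt: "\<tau> \<le> real m" unfolding m_def by linarith
    have jm: "m \<le> j" if "j \<in> B" for j
      using that unfolding B_def m_def by (auto simp: nat_le_iff) linarith
    have "(\<Sum>j\<in>B. \<rho> powr \<bar>real j - \<tau>\<bar>) \<le> (\<Sum>j\<in>B. \<rho> ^ (j - m))"
    proof (rule sum_mono)
      fix j assume j: "j \<in> B"
      then have "\<tau> < real j" by (auto simp: B_def)
      have "real (j - m) \<le> real j - \<tau>" using jm[OF j] mt by (simp add: of_nat_diff)
      then have "\<rho> powr (real j - \<tau>) \<le> \<rho> powr real (j - m)"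
        using assms by (intro powr_mono') auto
      moreover have "\<bar>real j - \<tau>\<bar> = real j - \<tau>" using \<open>\<tau> < real j\<close> by linarith
      moreover have "\<rho> ^ (j - m) = \<rho> powr real (j - m)" using assms by (simp add: powr_realpow)
      ultimately show "\<rho> powr \<bar>real j - \<tau>\<bar> \<le> \<rho> ^ (j - m)" by simp
    qed
    also have "\<dots> \<le> 1 / (1 - \<rho>)"
      using assms fin by (intro geom_reindex) (auto simp: inj_on_def, metis le_add_diff_inverse jm)
    finally show ?thesis .
  qed
  finally show ?thesis by simp
qed



lemma core_min:
  fixes L \<alpha> d :: real
  assumes "L > 0" "0 < \<alpha>" "\<alpha> < 1"
  shows "min 2 (exp (d * L / \<alpha>)) * exp (- d * L) \<le> 2 * exp (- min 1 (1/\<alpha> - 1) * L * \<bar>d\<bar>)"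
proof (cases "d \<ge> 0")
  case True
  have "min 2 (exp (d * L / \<alpha>)) * exp (- d * L) \<le> 2 * exp (- d * L)"
    by (intro mult_right_mono) auto
  also have "\<dots> \<le> 2 * exp (- min 1 (1/\<alpha> - 1) * L * \<bar>d\<bar>)"
  proof -
    have "min 1 (1/\<alpha> - 1) * L * d \<le> 1 * L * d"
      using True assms by (intro mult_right_mono) auto
    then show ?thesis using True by (simp add: mult_ac)
  qed
  finally show ?thesis .
next
  case False
  have "min 2 (exp (d * L / \<alpha>)) * exp (- d * L) \<le> exp (d * L / \<alpha>) * exp (- d * L)"
    by (intro mult_right_mono) auto
  also have "\<dots> = exp ((1/\<alpha> - 1) * L * d)" by (simp add: exp_add[symmetric] algebra_simps)
  also have "\<dots> \<le> exp (- min 1 (1/\<alpha> - 1) * L * \<bar>d\<bar>)"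
  proof -
    have "(1/\<alpha> - 1) * L * (-d) \<ge> min 1 (1/\<alpha> - 1) * L * (-d)"
      using False assms by (intro mult_right_mono) auto
    then show ?thesis using False by simp
  qed
  also have "\<dots> \<le> 2 * exp (- min 1 (1/\<alpha> - 1) * L * \<bar>d\<bar>)" by simp
  finally show ?thesis .
qed

lemma term_small:
  fixes r \<alpha> \<sigma> :: real and j :: nat
  assumes r: "r > 1" and a: "0 < \<alpha>" "\<alpha> < 1" and s: "\<sigma> > 0"
  shows "min 2 (\<sigma> * r powr (real (j + 1) / \<alpha>)) * (1 / r) ^ j
     \<le> 2 * r * \<sigma> powr \<alpha> * (r powr (- min 1 (1/\<alpha> - 1))) powr \<bar>real j - (- 1 - \<alpha> * log r \<sigma>)\<bar>"
proof -
  define L where "L = ln r"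
  have L: "L > 0" using r by (simp add: L_def)
  define \<tau> where "\<tau> = - 1 - \<alpha> * log r \<sigma>"
  define d where "d = real j - \<tau>"
  define c where "c = min 1 (1/\<alpha> - 1)"
  have ls: "ln \<sigma> = log r \<sigma> * L" using r s by (simp add: L_def log_def)
  have sig: "exp (log r \<sigma> * L) = \<sigma>" using s ls by (metis exp_ln)
  have pw: "r powr (real (j+1)/\<alpha>) = exp (real (j+1)/\<alpha> * L)" using r by (simp add: powr_def L_def)
  have "\<sigma> * r powr (real (j + 1) / \<alpha>) = exp (log r \<sigma> * L) * exp (real (j+1)/\<alpha> * L)"
    by (simp only: sig pw)
  also have "\<dots> = exp (d * L / \<alpha>)" unfolding d_def \<tau>_def using a
    by (simp add: exp_add[symmetric] field_simps)
  finally have e1: "\<sigma> * r powr (real (j + 1) / \<alpha>) = exp (d * L / \<alpha>)" .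
  have rj: "exp (real j * L) = r ^ j" using r by (simp add: exp_of_nat_mult L_def)
  have e2: "(1 / r) ^ j = exp (- d * L) * exp (- \<tau> * L)"
  proof -
    have "(1 / r) ^ j = inverse (exp (real j * L))" by (simp add: rj power_inverse divide_inverse)
    also have "\<dots> = exp (- d * L) * exp (- \<tau> * L)" unfolding d_def
      by (simp add: exp_add[symmetric] exp_minus[symmetric] algebra_simps)
    finally show ?thesis .
  qed
  have e3: "r * \<sigma> powr \<alpha> = exp (- \<tau> * L)"
    using r s a unfolding \<tau>_def powr_def
    by (simp add: ls exp_add L_def field_simps)
  have e4: "(r powr (- c)) powr \<bar>d\<bar> = exp (- c * L * \<bar>d\<bar>)"
    using r unfolding powr_def by (simp add: L_def)
  have "min 2 (\<sigma> * r powr (real (j + 1) / \<alpha>)) * (1 / r) ^ j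
      = (min 2 (exp (d * L / \<alpha>)) * exp (- d * L)) * exp (- \<tau> * L)"
    by (simp only: e1 e2 mult.assoc)
  also have "\<dots> \<le> (2 * exp (- c * L * \<bar>d\<bar>)) * exp (- \<tau> * L)"
    unfolding c_def by (intro mult_right_mono core_min) (use L a in auto)
  also have "\<dots> = 2 * (r * \<sigma> powr \<alpha>) * (r powr (- c)) powr \<bar>d\<bar>"
    by (simp add: e3 e4)
  finally show ?thesis unfolding d_def \<tau>_def c_def by simp
qed



lemma iexp_m1_le: "cmod (exp (\<i> * complex_of_real x) - 1) \<le> min 2 \<bar>x\<bar>"
proof -
  have "cmod (exp (\<i> * complex_of_real x) - 1) \<le> \<bar>x\<bar>"
    using iexp_approx1[of x 0] by simp
  moreover have "cmod (exp (\<i> * complex_of_real x) - 1) \<le> 2"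
    using norm_triangle_ineq4[of "exp (\<i> * complex_of_real x)" 1] by (simp add: norm_exp_i_times)
  ultimately show ?thesis by simp
qed

lemma iexp_m2_le: "cmod (exp (\<i> * complex_of_real x) - 1 - \<i> * complex_of_real x) \<le> x^2 / 2"
  using iexp_approx1[of x 1] by (simp add: diff_diff_eq power2_eq_square)

lemma rq: assumes "0 < p" "p < 1" shows "1 / rr p = qq p" "rr p > 1" "qq p = 1 - p"
  using assms by (auto simp: rr_def qq_def)

lemma fchar_m1:
  assumes p: "0 < p" "p < 1"
  shows "fchar \<alpha> p s - 1 = (\<Sum>j. (exp (\<i> * complex_of_real (s * rr p powr (real (j + 1) / \<alpha>))) - 1)
                          * complex_of_real (qq p ^ j * p))"
    and "summable (\<lambda>j. cmod ((exp (\<i> * complex_of_real (s * rr p powr (real (j + 1) / \<alpha>))) - 1)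
                          * complex_of_real (qq p ^ j * p)))"
proof -
  have q: "0 < qq p" "qq p < 1" using p by (auto simp: qq_def)
  have gs: "(\<lambda>j. qq p ^ j * p) sums 1"
  proof -
    have "(\<lambda>j. qq p ^ j * p) sums (1 / (1 - qq p) * p)"
      using geometric_sums[of "qq p"] q by (intro sums_mult2) auto
    then show ?thesis using p by (simp add: qq_def)
  qed
  then have gsc: "(\<lambda>j. complex_of_real (qq p ^ j * p)) sums 1"
    using sums_of_real[OF gs] by simp
  have sA: "summable (\<lambda>j. exp (\<i> * complex_of_real (s * rr p powr (real (j + 1) / \<alpha>)))
                          * complex_of_real (qq p ^ j * p))"
  proof (rule summable_norm_cancel, rule summable_comparison_test[OF _ sums_summable[OF gs]])
    show "\<exists>N. \<forall>n\<ge>N. norm (norm (exp (\<i> * complex_of_real (s * rr p powr (real (n + 1) / \<alpha>))) * complex_of_real (qq p ^ n * p))) \<le> qq p ^ n * p"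
      using p q by (auto simp: norm_mult norm_exp_i_times norm_power)
  qed
  have "fchar \<alpha> p s - 1 = (\<Sum>j. exp (\<i> * complex_of_real (s * rr p powr (real (j + 1) / \<alpha>)))
                          * complex_of_real (qq p ^ j * p)) - (\<Sum>j. complex_of_real (qq p ^ j * p))"
    unfolding fchar_def using sums_unique[OF gsc] by simp
  also have "\<dots> = (\<Sum>j. exp (\<i> * complex_of_real (s * rr p powr (real (j + 1) / \<alpha>)))
                          * complex_of_real (qq p ^ j * p) - complex_of_real (qq p ^ j * p))"
    by (rule suminf_diff[OF sA sums_summable[OF gsc]])
  finally show "fchar \<alpha> p s - 1 = (\<Sum>j. (exp (\<i> * complex_of_real (s * rr p powr (real (j + 1) / \<alpha>))) - 1)
                          * complex_of_real (qq p ^ j * p))" by (simp add: algebra_simps)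
  show "summable (\<lambda>j. cmod ((exp (\<i> * complex_of_real (s * rr p powr (real (j + 1) / \<alpha>))) - 1)
                          * complex_of_real (qq p ^ j * p)))"
  proof (rule summable_comparison_test[OF _ summable_mult[OF sums_summable[OF gs], of 2]])
    show "\<exists>N. \<forall>n\<ge>N. norm (cmod ((exp (\<i> * complex_of_real (s * rr p powr (real (n + 1) / \<alpha>))) - 1)
                          * complex_of_real (qq p ^ n * p))) \<le> 2 * (qq p ^ n * p)"
    proof (intro exI allI impI)
      fix n :: nat
      have "cmod (exp (\<i> * complex_of_real (s * rr p powr (real (n + 1) / \<alpha>))) - 1) \<le> 2"
        using iexp_m1_le by (meson min.boundedE)
      then show "norm (cmod ((exp (\<i> * complex_of_real (s * rr p powr (real (n + 1) / \<alpha>))) - 1)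
                          * complex_of_real (qq p ^ n * p))) \<le> 2 * (qq p ^ n * p)"
        using p q by (simp add: norm_mult abs_mult norm_power del: of_real_mult)
    qed
  qed
qed



lemma powr_geo:
  fixes r a :: real assumes "r > 0"
  shows "r powr (real (j + 1) / a) * (1 / r) ^ j = r powr (1 / a) * (r powr (1 / a - 1)) ^ j"
proof -
  have "(r powr (1 / a - 1)) ^ j = r powr ((1/a - 1) * real j)"
    using assms by (simp add: powr_realpow[symmetric] powr_powr flip: powr_power)
  moreover have "(1 / r) ^ j = r powr (- real j)"
    using assms by (simp add: powr_minus powr_realpow divide_inverse power_inverse)
  ultimately show ?thesis using assms
    by (simp add: powr_add[symmetric] add_divide_distrib algebra_simps diff_divide_distrib)
qed

lemma norm_term_le:
  assumes p: "0 < p" "p < 1"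
  shows "cmod ((exp (\<i> * complex_of_real (s * rr p powr (real (j + 1) / \<alpha>))) - 1)
                          * complex_of_real (qq p ^ j * p))
         \<le> p * (min 2 (\<bar>s\<bar> * rr p powr (real (j + 1) / \<alpha>)) * (1 / rr p) ^ j)"
proof -
  have q: "0 < qq p" using p by (simp add: qq_def)
  have "cmod ((exp (\<i> * complex_of_real (s * rr p powr (real (j + 1) / \<alpha>))) - 1)
                          * complex_of_real (qq p ^ j * p))
     = cmod (exp (\<i> * complex_of_real (s * rr p powr (real (j + 1) / \<alpha>))) - 1) * (qq p ^ j * p)"
    using p q by (simp add: norm_mult del: of_real_mult)
  also have "\<dots> \<le> min 2 \<bar>s * rr p powr (real (j + 1) / \<alpha>)\<bar> * (qq p ^ j * p)"
    by (intro mult_right_mono iexp_m1_le) (use p q in auto)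
  also have "\<dots> = p * (min 2 (\<bar>s\<bar> * rr p powr (real (j + 1) / \<alpha>)) * (1 / rr p) ^ j)"
    using rq[OF p] by (simp add: abs_mult)
  finally show ?thesis .
qed

lemma fchar_small:
  assumes p: "0 < p" "p < 1" and a: "0 < \<alpha>" "\<alpha> < 1"
  shows "cmod (fchar \<alpha> p s - 1) \<le> (4 * rr p * p / (1 - rr p powr (- min 1 (1/\<alpha> - 1)))) * \<bar>s\<bar> powr \<alpha>"
proof -
  define r where "r = rr p"
  have r: "r > 1" using rq[OF p] by (simp add: r_def)
  define \<rho> where "\<rho> = r powr (- min 1 (1/\<alpha> - 1))"
  have c: "min 1 (1/\<alpha> - 1) > 0" using a by (simp add: field_simps)
  have \<rho>: "0 < \<rho>" "\<rho> < 1" using r c unfolding \<rho>_def by (auto intro: powr_less_one)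
  let ?T = "\<lambda>j. (exp (\<i> * complex_of_real (s * rr p powr (real (j + 1) / \<alpha>))) - 1)
                          * complex_of_real (qq p ^ j * p)"
  note rep = fchar_m1[OF p, where \<alpha>=\<alpha> and s=s]
  have "cmod (fchar \<alpha> p s - 1) \<le> (\<Sum>j. cmod (?T j))"
    unfolding rep(1) using summable_norm[OF rep(2)] by simp
  also have "\<dots> \<le> (4 * r * p / (1 - \<rho>)) * \<bar>s\<bar> powr \<alpha>"
  proof (cases "s = 0")
    case True
    then show ?thesis by simp
  next
    case False
    define \<sigma> where "\<sigma> = \<bar>s\<bar>"
    have \<sigma>: "\<sigma> > 0" using False by (simp add: \<sigma>_def)
    define \<tau> where "\<tau> = - 1 - \<alpha> * log r \<sigma>"
    show ?thesis
    proof (rule suminf_le_const[OF rep(2)])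
      fix N
      have "(\<Sum>j<N. cmod (?T j)) \<le> (\<Sum>j<N. p * (2 * r * \<sigma> powr \<alpha> * \<rho> powr \<bar>real j - \<tau>\<bar>))"
      proof (rule sum_mono)
        fix j
        show "cmod (?T j) \<le> p * (2 * r * \<sigma> powr \<alpha> * \<rho> powr \<bar>real j - \<tau>\<bar>)"
          using norm_term_le[OF p, of s j \<alpha>] term_small[OF r a \<sigma>, of j] p
          unfolding \<sigma>_def \<tau>_def \<rho>_def r_def
          by (meson mult_left_mono less_imp_le order_trans)
      qed
      also have "\<dots> = p * (2 * r * \<sigma> powr \<alpha>) * (\<Sum>j<N. \<rho> powr \<bar>real j - \<tau>\<bar>)"
        by (simp add: sum_distrib_left mult_ac)
      also have "\<dots> \<le> p * (2 * r * \<sigma> powr \<alpha>) * (2 / (1 - \<rho>))"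
        by (intro mult_left_mono geom_two_sided \<rho>) (use p r in auto)
      also have "\<dots> = (4 * r * p / (1 - \<rho>)) * \<bar>s\<bar> powr \<alpha>"
        by (simp add: \<sigma>_def)
      finally show "(\<Sum>j<N. cmod (?T j)) \<le> (4 * r * p / (1 - \<rho>)) * \<bar>s\<bar> powr \<alpha>" .
    qed
  qed
  finally show ?thesis unfolding \<rho>_def r_def .
qed

lemma fchar_large:
  assumes p: "0 < p" "p < 1" and a: "1 < \<alpha>"
  shows "cmod (fchar \<alpha> p s - 1) \<le> (p * rr p powr (1/\<alpha>) / (1 - rr p powr (1/\<alpha> - 1))) * \<bar>s\<bar>"
proof -
  define r where "r = rr p"
  have r: "r > 1" using rq[OF p] by (simp add: r_def)
  define \<rho> where "\<rho> = r powr (1/\<alpha> - 1)"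
  have \<rho>: "0 < \<rho>" "\<rho> < 1" using r a unfolding \<rho>_def by (auto intro: powr_less_one simp: field_simps)
  let ?T = "\<lambda>j. (exp (\<i> * complex_of_real (s * rr p powr (real (j + 1) / \<alpha>))) - 1)
                          * complex_of_real (qq p ^ j * p)"
  note rep = fchar_m1[OF p, where \<alpha>=\<alpha> and s=s]
  have gs: "(\<lambda>j. p * \<bar>s\<bar> * r powr (1/\<alpha>) * \<rho> ^ j) sums (p * \<bar>s\<bar> * r powr (1/\<alpha>) * (1 / (1 - \<rho>)))"
    by (intro sums_mult geometric_sums) (use \<rho> in auto)
  have "cmod (fchar \<alpha> p s - 1) \<le> (\<Sum>j. cmod (?T j))"
    unfolding rep(1) using summable_norm[OF rep(2)] by simp
  also have "\<dots> \<le> (\<Sum>j. p * \<bar>s\<bar> * r powr (1/\<alpha>) * \<rho> ^ j)"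
  proof (rule suminf_le[OF _ rep(2) sums_summable[OF gs]])
    fix j
    have "cmod (?T j) \<le> p * (min 2 (\<bar>s\<bar> * r powr (real (j + 1) / \<alpha>)) * (1 / r) ^ j)"
      using norm_term_le[OF p, of s j \<alpha>] by (simp add: r_def)
    also have "\<dots> \<le> p * ((\<bar>s\<bar> * r powr (real (j + 1) / \<alpha>)) * (1 / r) ^ j)"
      using p r by (intro mult_left_mono mult_right_mono) auto
    also have "\<dots> = p * \<bar>s\<bar> * (r powr (real (j + 1) / \<alpha>) * (1 / r) ^ j)" by simp
    also have "\<dots> = p * \<bar>s\<bar> * r powr (1/\<alpha>) * \<rho> ^ j"
      using powr_geo[of r j \<alpha>] r by (simp add: \<rho>_def)
    finally show "cmod (?T j) \<le> p * \<bar>s\<bar> * r powr (1/\<alpha>) * \<rho> ^ j" .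
  qed
  also have "\<dots> = (p * r powr (1/\<alpha>) / (1 - \<rho>)) * \<bar>s\<bar>"
    using sums_unique[OF gs] by (simp add: mult_ac)
  finally show ?thesis unfolding \<rho>_def r_def .
qed



lemma key_id:
  fixes r g M t \<alpha> :: real
  assumes r: "r > 1" and g: "g > 0" and a: "\<alpha> > 0"
  shows "(t / (r powr ((M + real j) / \<alpha>) * g powr (1 / \<alpha>)))^2 * (g * r powr (M + real j))
       = t^2 * (g * r powr M) powr (1 - 2/\<alpha>) * (r powr (1 - 2/\<alpha>)) ^ j"
proof -
  have p1: "(r powr ((M + real j) / \<alpha>))^2 = r powr (2 * (M + real j) / \<alpha>)"
    using r powr_power[of r "(M + real j) / \<alpha>" 2] by simp
  have p2: "(g powr (1 / \<alpha>))^2 = g powr (2 / \<alpha>)"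
    using g powr_power[of g "1 / \<alpha>" 2] by simp
  have p3: "(r powr (1 - 2/\<alpha>)) ^ j = r powr ((1 - 2/\<alpha>) * real j)"
    using r powr_power[of r "1 - 2/\<alpha>" j] by (simp add: mult.commute)
  have p4: "(g * r powr M) powr (1 - 2/\<alpha>) = g powr (1 - 2/\<alpha>) * r powr (M * (1 - 2/\<alpha>))"
    using r g by (simp add: powr_mult powr_powr)
  have "(t / (r powr ((M + real j) / \<alpha>) * g powr (1 / \<alpha>)))^2 * (g * r powr (M + real j))
      = t^2 * (g / g powr (2 / \<alpha>)) * (r powr (M + real j) / r powr (2 * (M + real j) / \<alpha>))"
    by (simp add: power_divide power_mult_distrib p1 p2 mult_ac)
  also have "\<dots> = t^2 * g powr (1 - 2/\<alpha>) * r powr ((M + real j) - 2 * (M + real j) / \<alpha>)"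
    using r g by (simp add: powr_diff)
  also have "\<dots> = t^2 * (g * r powr M) powr (1 - 2/\<alpha>) * (r powr (1 - 2/\<alpha>)) ^ j"
    unfolding p3 p4 using r by (simp add: powr_add[symmetric] algebra_simps diff_divide_distrib add_divide_distrib)
  finally show ?thesis .
qed

lemma R12_bound:
  assumes p: "0 < p" "p < 1" and a: "0 < \<alpha>" "\<alpha> < 2" and n: "n \<ge> 1"
  shows "cmod (R12 \<alpha> p n t) \<le> (p / (2 * qq p * (1 - rr p powr (1 - 2/\<alpha>)))) * t^2 * real n powr (1 - 2/\<alpha>)"
proof -
  define r where "r = rr p"
  have r: "r > 1" using rq[OF p] by (simp add: r_def)
  have q: "qq p > 0" using p by (simp add: qq_def)
  define \<rho> where "\<rho> = r powr (1 - 2/\<alpha>)"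
  have \<rho>: "0 < \<rho>" "\<rho> < 1" using r a unfolding \<rho>_def by (auto intro: powr_less_one simp: field_simps)
  define M where "M = real_of_int (Mn p n)"
  define g where "g = gam p n"
  have g: "g > 0" using n r unfolding g_def gam_def r_def by simp
  have gn: "g * r powr M = real n" unfolding g_def gam_def M_def r_def using r by (simp add: r_def)
  define f where "f = (\<lambda>j. (let m = real_of_int (Mn p n) + real j;
                  u = t / (rr p powr (m / \<alpha>) * gam p n powr (1 / \<alpha>))
              in (exp (\<i> * complex_of_real u) - 1 - \<i> * complex_of_real u)
                 * complex_of_real (p * gam p n / qq p * rr p powr m)))"
  define C where "C = p / (2 * qq p) * t^2 * real n powr (1 - 2/\<alpha>)"
  have C: "C \<ge> 0" using p q unfolding C_def by simp
  have fb: "norm (f j) \<le> C * \<rho> ^ j" for j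
  proof -
    define u where "u = t / (r powr ((M + real j) / \<alpha>) * g powr (1 / \<alpha>))"
    have "norm (f j) = cmod (exp (\<i> * complex_of_real u) - 1 - \<i> * complex_of_real u) * (p * g / qq p * r powr (M + real j))"
    proof -
      have "f j = (exp (\<i> * complex_of_real u) - 1 - \<i> * complex_of_real u) * complex_of_real (p * g / qq p * r powr (M + real j))"
        unfolding f_def Let_def u_def M_def g_def r_def by (rule refl)
      moreover have "p * g / qq p * r powr (M + real j) \<ge> 0" using p q g by simp
      ultimately show ?thesis by (simp only: norm_mult norm_of_real abs_of_nonneg)
    qed
    also have "\<dots> \<le> u^2/2 * (p * g / qq p * r powr (M + real j))"
      by (intro mult_right_mono iexp_m2_le) (use p q g in auto)
    also have "\<dots> = p / (2 * qq p) * (u^2 * (g * r powr (M + real j)))" by (simp add: field_simps)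
    also have "\<dots> = C * \<rho> ^ j"
      unfolding u_def key_id[OF r g a(1)] gn C_def \<rho>_def by simp
    finally show ?thesis .
  qed
  have gs: "(\<lambda>j. C * \<rho> ^ j) sums (C * (1 / (1 - \<rho>)))"
    by (intro sums_mult geometric_sums) (use \<rho> in auto)
  have sn: "summable (\<lambda>j. norm (f j))"
    by (rule summable_comparison_test[OF _ sums_summable[OF gs]]) (use fb in auto)
  have "cmod (R12 \<alpha> p n t) = norm (suminf f)" unfolding R12_def f_def by simp
  also have "\<dots> \<le> (\<Sum>j. norm (f j))" using summable_norm[OF sn] by simp
  also have "\<dots> \<le> (\<Sum>j. C * \<rho> ^ j)" by (rule suminf_le[OF fb sn sums_summable[OF gs]])
  also have "\<dots> = C / (1 - \<rho>)" using sums_unique[OF gs] by simp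
  also have "\<dots> = (p / (2 * qq p * (1 - rr p powr (1 - 2/\<alpha>)))) * t^2 * real n powr (1 - 2/\<alpha>)"
    unfolding C_def \<rho>_def r_def by (simp add: field_simps)
  finally show ?thesis .
qed



lemma R32_series_bound:
  fixes x :: complex
  assumes n: "n \<ge> 1" and x: "cmod x \<le> real n / 2"
  shows "cmod (\<Sum>j. complex_of_real ((-1) ^ (j + 3) / real (j + 2)) * x ^ (j + 2) / of_nat n ^ (j + 1))
         \<le> 2 * cmod x ^ 2 / real n"
proof -
  define f where "f = (\<lambda>j. complex_of_real ((-1) ^ (j + 3) / real (j + 2)) * x ^ (j + 2) / of_nat n ^ (j + 1))"
  define C where "C = cmod x ^ 2 / real n"
  have nn: "real n > 0" using n by simp
  have fb: "norm (f j) \<le> C * (1/2) ^ j" for j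
  proof -
    have "norm (f j) = (1 / real (j + 2)) * (cmod x ^ (j + 2) / real n ^ (j + 1))"
      unfolding f_def using norm_of_nat[of "j+2", where 'a=complex]
      by (simp add: norm_mult norm_divide norm_power add.commute)
    also have "\<dots> \<le> 1 * (cmod x ^ (j + 2) / real n ^ (j + 1))"
      by (intro mult_right_mono) (auto simp: field_simps)
    also have "\<dots> = C * (cmod x / real n) ^ j"
      unfolding C_def using nn by (simp add: power_add power_divide field_simps power2_eq_square)
    also have "\<dots> \<le> C * (1/2) ^ j"
      unfolding C_def using nn x by (intro mult_left_mono power_mono) (auto simp: field_simps)
    finally show ?thesis .
  qed
  have gs: "(\<lambda>j. C * (1/2::real) ^ j) sums (C * (1 / (1 - 1/2)))"
    by (intro sums_mult geometric_sums) auto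
  have sn: "summable (\<lambda>j. norm (f j))"
    by (rule summable_comparison_test[OF _ sums_summable[OF gs]]) (use fb in auto)
  have "norm (suminf f) \<le> (\<Sum>j. norm (f j))" using summable_norm[OF sn] by simp
  also have "\<dots> \<le> (\<Sum>j. C * (1/2::real) ^ j)" by (rule suminf_le[OF fb sn sums_summable[OF gs]])
  also have "\<dots> = 2 * C" using sums_unique[OF gs] by simp
  finally show ?thesis unfolding f_def C_def by simp
qed

lemma R32_bound:
  assumes n: "n \<ge> 1" and x: "cmod (xn \<alpha> p n t) / real n \<le> 1 / 2"
  shows "cmod (R32 \<alpha> p n t) \<le> 2 * cmod (xn \<alpha> p n t) ^ 2 / real n"
  unfolding R32_def using x n by (intro R32_series_bound) (auto simp: field_simps)

lemma exp_tail:
  fixes z :: complex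
  shows "cmod (\<Sum>j. z ^ (j + l) / of_nat (fact (j + l))) \<le> cmod z ^ l * exp (cmod z)"
proof -
  define f where "f = (\<lambda>j. z ^ (j + l) / of_nat (fact (j + l)))"
  have es: "(\<lambda>j. cmod z ^ l * (cmod z ^ j / fact j)) sums (cmod z ^ l * exp (cmod z))"
    by (intro sums_mult) (use exp_converges[of "cmod z"] in \<open>simp add: divide_inverse mult.commute\<close>)
  have fb: "norm (f j) \<le> cmod z ^ l * (cmod z ^ j / fact j)" for j
  proof -
    have "norm (f j) = cmod z ^ l * cmod z ^ j / fact (j + l)"
      unfolding f_def by (simp add: norm_divide norm_power power_add mult_ac norm_mult)
    also have "\<dots> \<le> cmod z ^ l * cmod z ^ j / fact j"
      by (intro divide_left_mono) (auto simp: fact_mono)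
    finally show ?thesis by simp
  qed
  have sn: "summable (\<lambda>j. norm (f j))"
    by (rule summable_comparison_test[OF _ sums_summable[OF es]]) (use fb in auto)
  have "norm (suminf f) \<le> (\<Sum>j. norm (f j))" using summable_norm[OF sn] by simp
  also have "\<dots> \<le> (\<Sum>j. cmod z ^ l * (cmod z ^ j / fact j))" by (rule suminf_le[OF fb sn sums_summable[OF es]])
  also have "\<dots> = cmod z ^ l * exp (cmod z)" using sums_unique[OF es] by simp
  finally show ?thesis unfolding f_def by simp
qed



lemma R2_le:
  assumes "cmod (R12 \<alpha> p n t + R32 \<alpha> p n t) \<le> w" "w \<le> B"
  shows "cmod (R2 \<alpha> p n l t) \<le> w ^ l * exp B"
proof -
  have "cmod (R2 \<alpha> p n l t) \<le> cmod (R12 \<alpha> p n t + R32 \<alpha> p n t) ^ l * exp (cmod (R12 \<alpha> p n t + R32 \<alpha> p n t))"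
    unfolding R2_def by (rule exp_tail)
  also have "\<dots> \<le> w ^ l * exp B"
  proof -
    have "0 \<le> w" using assms(1) norm_ge_zero order_trans by blast
    then show ?thesis using assms by (intro mult_mono power_mono) auto
  qed
  finally show ?thesis .
qed

lemma pow_powr: "a \<ge> 0 \<Longrightarrow> l \<ge> 1 \<Longrightarrow> (a powr b) ^ l = a powr (real l * b)" for a b :: real
  by (cases "a = 0") (auto simp: powr_power)

lemma abs_powr_div:
  fixes t :: real and n :: nat assumes "n \<ge> 1" "\<alpha> > 0"
  shows "\<bar>t / real n powr (1/\<alpha>)\<bar> powr \<alpha> = \<bar>t\<bar> powr \<alpha> / real n"
proof -
  have "\<bar>t / real n powr (1/\<alpha>)\<bar> = \<bar>t\<bar> / real n powr (1/\<alpha>)" by simp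
  then show ?thesis using assms by (simp add: powr_divide powr_powr)
qed



lemma main_small:
  fixes l :: nat and alpha p C1 C2 :: real
  assumes l: "l \<ge> 1"
    and alpha: "0 < alpha" "alpha < 1"
    and p: "0 < p" "p < 1"
    and C1pos: "C1 > 0"
    and C2pos: "C2 > 0"
    and C2: "\<And>n t. n \<ge> 1 \<Longrightarrow> \<bar>t\<bar> \<le> C2 * real n powr (1 / alpha) \<Longrightarrow>
               cmod (xn alpha p n t) / real n \<le> 1 / 2"
  shows "\<exists>C4 > 0. \<exists>\<epsilon>. 0 < \<epsilon> \<and> \<epsilon> \<le> C2 \<and>
           (\<forall>n t. n \<ge> 1 \<longrightarrow> \<bar>t\<bar> \<le> \<epsilon> * real n powr (1 / alpha) \<longrightarrow>
              cmod (R2 alpha p n l t) \<le>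
                 C4 * \<bar>t\<bar> powr (2 * real l * alpha) * exp (C1 * \<bar>t\<bar> powr alpha / 2)
                        * real n powr (- real l))"
proof -
  define r where "r = rr p"
  have r: "r > 1" using rq[OF p] by (simp add: r_def)
  have q: "qq p > 0" using p by (simp add: qq_def)
  define K1 where "K1 = 4 * rr p * p / (1 - rr p powr (- min 1 (1/alpha - 1)))"
  define K2 where "K2 = p / (2 * qq p * (1 - rr p powr (1 - 2/alpha)))"
  have c: "min 1 (1/alpha - 1) > 0" using alpha by (simp add: field_simps)
  have \<rho>1: "rr p powr (- min 1 (1/alpha - 1)) < 1" using r c unfolding r_def by (auto intro: powr_less_one)
  have \<rho>2: "rr p powr (1 - 2/alpha) < 1" using r alpha unfolding r_def by (auto intro: powr_less_one simp: field_simps)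
  have K1: "K1 \<ge> 0" unfolding K1_def using \<rho>1 r p by (simp add: r_def)
  have K2: "K2 \<ge> 0" unfolding K2_def using \<rho>2 q p by simp
  define K where "K = 2 * K1^2 + K2 + 1"
  have K: "K > 0" "2 * K1^2 + K2 \<le> K" unfolding K_def using K1 K2 zero_le_power2[of K1] by linarith+
  define \<epsilon> where "\<epsilon> = min C2 (min 1 ((C1 / (2 * K)) powr (1/alpha)))"
  have \<epsilon>: "0 < \<epsilon>" "\<epsilon> \<le> C2" "\<epsilon> \<le> 1" using C2pos C1pos K by (auto simp: \<epsilon>_def)
  have \<epsilon>a: "\<epsilon> powr alpha \<le> C1 / (2 * K)"
  proof -
    have "\<epsilon> powr alpha \<le> ((C1 / (2 * K)) powr (1/alpha)) powr alpha"
      using \<epsilon> alpha by (intro powr_mono2) (auto simp: \<epsilon>_def)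
    also have "\<dots> = C1 / (2 * K)" using alpha C1pos K by (simp add: powr_powr)
    finally show ?thesis .
  qed
  show ?thesis
  proof (rule exI[of _ "K ^ l"], intro conjI exI[of _ \<epsilon>] allI impI)
    show "K ^ l > 0" using K by simp
    show "0 < \<epsilon>" "\<epsilon> \<le> C2" using \<epsilon> by auto
    fix n :: nat and t :: real
    assume n: "n \<ge> 1" and t: "\<bar>t\<bar> \<le> \<epsilon> * real n powr (1 / alpha)"
    have nn: "real n > 0" using n by simp
    define s where "s = t / real n powr (1/alpha)"
    have sa: "\<bar>s\<bar> powr alpha = \<bar>t\<bar> powr alpha / real n"
      unfolding s_def using abs_powr_div[OF n alpha(1)] .
    have ss: "\<bar>s\<bar> \<le> \<epsilon>" using t nn unfolding s_def by (simp add: field_simps)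
    have x: "cmod (xn alpha p n t) \<le> K1 * \<bar>t\<bar> powr alpha"
    proof -
      have "cmod (xn alpha p n t) = real n * cmod (fchar alpha p s - 1)"
        unfolding xn_def s_def by (simp add: norm_mult)
      also have "\<dots> \<le> real n * (K1 * \<bar>s\<bar> powr alpha)"
        using fchar_small[OF p alpha, of s] unfolding K1_def by (intro mult_left_mono) auto
      also have "\<dots> = K1 * \<bar>t\<bar> powr alpha" using nn by (simp add: sa)
      finally show ?thesis .
    qed
    have R32: "cmod (R32 alpha p n t) \<le> 2 * K1^2 * (\<bar>t\<bar> powr (2 * alpha) / real n)"
    proof -
      have "\<bar>t\<bar> \<le> C2 * real n powr (1 / alpha)"
        using order_trans[OF t mult_right_mono[OF \<epsilon>(2) powr_ge_zero]] .
      then have "cmod (R32 alpha p n t) \<le> 2 * cmod (xn alpha p n t) ^ 2 / real n"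
        by (intro R32_bound n C2 n)
      also have "\<dots> \<le> 2 * (K1 * \<bar>t\<bar> powr alpha) ^ 2 / real n"
        using x nn by (intro divide_right_mono mult_left_mono power_mono) auto
      also have "\<dots> = 2 * K1^2 * (\<bar>t\<bar> powr (2 * alpha) / real n)"
        using pow_powr[of "\<bar>t\<bar>" 2 alpha] by (simp add: power_mult_distrib)
      finally show ?thesis .
    qed
    have R12: "cmod (R12 alpha p n t) \<le> K2 * (\<bar>t\<bar> powr (2 * alpha) / real n)"
    proof -
      have "cmod (R12 alpha p n t) \<le> K2 * t^2 * real n powr (1 - 2/alpha)"
        using R12_bound[OF p alpha(1) _ n, of t] alpha unfolding K2_def by simp
      also have "\<dots> \<le> K2 * (\<bar>t\<bar> powr (2 * alpha) / real n)"
      proof (cases "t = 0")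
        case True then show ?thesis by simp
      next
        case False
        then have tp: "\<bar>t\<bar> > 0" by simp
        have "t^2 = \<bar>t\<bar> powr (2 * alpha) * \<bar>t\<bar> powr (2 - 2 * alpha)"
          using tp by (simp add: powr_add[symmetric] flip: powr_realpow)
        also have "\<dots> \<le> \<bar>t\<bar> powr (2 * alpha) * (real n powr (1/alpha)) powr (2 - 2 * alpha)"
        proof -
          have "\<bar>t\<bar> \<le> real n powr (1/alpha)"
            using order_trans[OF t mult_left_le_one_le[OF powr_ge_zero _ \<epsilon>(3)]] \<epsilon>(1) by simp
          then show ?thesis using alpha tp by (intro mult_left_mono powr_mono2) auto
        qed
        finally have tt: "t^2 \<le> \<bar>t\<bar> powr (2 * alpha) * (real n powr (1/alpha)) powr (2 - 2 * alpha)" .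
        have eq: "(real n powr (1/alpha)) powr (2 - 2 * alpha) * real n powr (1 - 2/alpha) = real n powr (-1)"
          using nn alpha by (simp add: powr_powr powr_add[symmetric] field_simps)
        have "t^2 * real n powr (1 - 2/alpha) \<le>
            \<bar>t\<bar> powr (2 * alpha) * ((real n powr (1/alpha)) powr (2 - 2 * alpha) * real n powr (1 - 2/alpha))"
          using mult_right_mono[OF tt, of "real n powr (1 - 2/alpha)"] by (simp add: mult.assoc)
        then have "t^2 * real n powr (1 - 2/alpha) \<le> \<bar>t\<bar> powr (2 * alpha) / real n"
          unfolding eq using nn by (simp add: powr_minus divide_inverse)
        then show ?thesis using mult_left_mono[OF _ K2] by (metis mult.assoc)
      qed
      finally show ?thesis .
    qed
    define w where "w = K * (\<bar>t\<bar> powr (2 * alpha) / real n)"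
    have z: "cmod (R12 alpha p n t + R32 alpha p n t) \<le> w"
    proof -
      have "cmod (R12 alpha p n t + R32 alpha p n t) \<le> (2 * K1^2 + K2) * (\<bar>t\<bar> powr (2 * alpha) / real n)"
      proof -
        have "cmod (R12 alpha p n t + R32 alpha p n t) \<le> K2 * (\<bar>t\<bar> powr (2 * alpha) / real n) + 2 * K1^2 * (\<bar>t\<bar> powr (2 * alpha) / real n)"
          using norm_triangle_ineq[of "R12 alpha p n t" "R32 alpha p n t"] R12 R32 by linarith
        then show ?thesis by (simp only: distrib_right)
      qed
      also have "\<dots> \<le> w" unfolding w_def using K nn by (intro mult_right_mono) auto
      finally show ?thesis .
    qed
    have wB: "w \<le> C1 * \<bar>t\<bar> powr alpha / 2"
    proof -
      have "\<bar>t\<bar> powr (2 * alpha) / real n = \<bar>t\<bar> powr alpha * \<bar>s\<bar> powr alpha"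
        by (simp add: sa powr_add[symmetric])
      moreover have "\<bar>s\<bar> powr alpha \<le> C1 / (2 * K)"
        using order_trans[OF powr_mono2[OF _ abs_ge_zero ss] \<epsilon>a] alpha by simp
      ultimately have "\<bar>t\<bar> powr (2 * alpha) / real n \<le> \<bar>t\<bar> powr alpha * (C1 / (2 * K))"
        by (metis mult_left_mono powr_ge_zero)
      then have "w \<le> K * (\<bar>t\<bar> powr alpha * (C1 / (2 * K)))"
        unfolding w_def using K by (metis less_imp_le mult_left_mono)
      also have "\<dots> = C1 * \<bar>t\<bar> powr alpha / 2" using K by (simp add: field_simps)
      finally show ?thesis .
    qed
    have "cmod (R2 alpha p n l t) \<le> w ^ l * exp (C1 * \<bar>t\<bar> powr alpha / 2)"
      by (rule R2_le[OF z wB])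
    also have "w ^ l = K ^ l * \<bar>t\<bar> powr (2 * real l * alpha) * real n powr (- real l)"
      unfolding w_def using pow_powr[of "\<bar>t\<bar>" l "2 * alpha"] l nn
      by (simp add: power_mult_distrib power_divide powr_minus powr_realpow divide_inverse mult_ac power_inverse)
    finally show "cmod (R2 alpha p n l t) \<le> K ^ l * \<bar>t\<bar> powr (2 * real l * alpha) * exp (C1 * \<bar>t\<bar> powr alpha / 2) * real n powr (- real l)"
      by (simp add: mult_ac)
  qed
qed



lemma main_large:
  fixes l :: nat and alpha p C1 C2 :: real
  assumes l: "l \<ge> 1"
    and alpha: "1 < alpha" "alpha < 2"
    and p: "0 < p" "p < 1"
    and C1pos: "C1 > 0"
    and C2pos: "C2 > 0"
    and C2: "\<And>n t. n \<ge> 1 \<Longrightarrow> \<bar>t\<bar> \<le> C2 * real n powr (1 / alpha) \<Longrightarrow>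
               cmod (xn alpha p n t) / real n \<le> 1 / 2"
  shows "\<exists>C4 > 0. \<exists>\<epsilon>. 0 < \<epsilon> \<and> \<epsilon> \<le> C2 \<and>
           (\<forall>n t. n \<ge> 1 \<longrightarrow> \<bar>t\<bar> \<le> \<epsilon> * real n powr (1 / alpha) \<longrightarrow>
              cmod (R2 alpha p n l t) \<le>
                 C4 * \<bar>t\<bar> powr (2 * real l) * exp (C1 * \<bar>t\<bar> powr alpha / 2)
                        * real n powr (- real l * (2 - alpha) / alpha))"
proof -
  define r where "r = rr p"
  have r: "r > 1" using rq[OF p] by (simp add: r_def)
  have q: "qq p > 0" using p by (simp add: qq_def)
  have a0: "alpha > 0" using alpha by simp
  define K1 where "K1 = p * rr p powr (1/alpha) / (1 - rr p powr (1/alpha - 1))"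
  define K2 where "K2 = p / (2 * qq p * (1 - rr p powr (1 - 2/alpha)))"
  have \<rho>1: "rr p powr (1/alpha - 1) < 1" using r alpha unfolding r_def by (auto intro: powr_less_one simp: field_simps)
  have \<rho>2: "rr p powr (1 - 2/alpha) < 1" using r alpha unfolding r_def by (auto intro: powr_less_one simp: field_simps)
  have K1: "K1 \<ge> 0" unfolding K1_def using \<rho>1 r p by (simp add: r_def)
  have K2: "K2 \<ge> 0" unfolding K2_def using \<rho>2 q p by simp
  define K where "K = 2 * K1^2 + K2 + 1"
  have K: "K > 0" "2 * K1^2 + K2 \<le> K" unfolding K_def using K1 K2 zero_le_power2[of K1] by linarith+
  define \<epsilon> where "\<epsilon> = min C2 ((C1 / (2 * K)) powr (1/(2 - alpha)))"
  have \<epsilon>: "0 < \<epsilon>" "\<epsilon> \<le> C2" using C2pos C1pos K by (auto simp: \<epsilon>_def)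
  have \<epsilon>a: "\<epsilon> powr (2 - alpha) \<le> C1 / (2 * K)"
  proof -
    have "\<epsilon> powr (2 - alpha) \<le> ((C1 / (2 * K)) powr (1/(2 - alpha))) powr (2 - alpha)"
      using \<epsilon> alpha by (intro powr_mono2) (auto simp: \<epsilon>_def)
    also have "\<dots> = C1 / (2 * K)" using alpha C1pos K by (simp add: powr_powr)
    finally show ?thesis .
  qed
  show ?thesis
  proof (rule exI[of _ "K ^ l"], intro conjI exI[of _ \<epsilon>] allI impI)
    show "K ^ l > 0" using K by simp
    show "0 < \<epsilon>" "\<epsilon> \<le> C2" using \<epsilon> by auto
    fix n :: nat and t :: real
    assume n: "n \<ge> 1" and t: "\<bar>t\<bar> \<le> \<epsilon> * real n powr (1 / alpha)"
    have nn: "real n > 0" using n by simp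
    define s where "s = t / real n powr (1/alpha)"
    have ne: "real n / real n powr (1/alpha) = real n powr (1 - 1/alpha)"
      using nn by (simp add: powr_diff)
    have x: "cmod (xn alpha p n t) \<le> K1 * \<bar>t\<bar> * real n powr (1 - 1/alpha)"
    proof -
      have "cmod (xn alpha p n t) = real n * cmod (fchar alpha p s - 1)"
        unfolding xn_def s_def by (simp add: norm_mult)
      also have "\<dots> \<le> real n * (K1 * \<bar>s\<bar>)"
        using fchar_large[OF p alpha(1), of s] unfolding K1_def by (intro mult_left_mono) auto
      also have "\<dots> = K1 * \<bar>t\<bar> * (real n / real n powr (1/alpha))" by (simp add: s_def)
      finally show ?thesis by (simp add: ne)
    qed
    have R32: "cmod (R32 alpha p n t) \<le> 2 * K1^2 * (t^2 * real n powr (1 - 2/alpha))"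
    proof -
      have "\<bar>t\<bar> \<le> C2 * real n powr (1 / alpha)"
        using order_trans[OF t mult_right_mono[OF \<epsilon>(2) powr_ge_zero]] .
      then have "cmod (R32 alpha p n t) \<le> 2 * cmod (xn alpha p n t) ^ 2 / real n"
        by (intro R32_bound n C2 n)
      also have "\<dots> \<le> 2 * (K1 * \<bar>t\<bar> * real n powr (1 - 1/alpha)) ^ 2 / real n"
        using x nn by (intro divide_right_mono mult_left_mono power_mono) auto
      also have "\<dots> = 2 * K1^2 * (t^2 * ((real n powr (1 - 1/alpha))^2 / real n))"
        by (simp add: power_mult_distrib)
      also have "(real n powr (1 - 1/alpha))^2 / real n = real n powr (1 - 2/alpha)"
      proof -
        have "(real n powr (1 - 1/alpha))^2 / real n = real n powr (2 * (1 - 1/alpha)) / real n powr 1"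
          using nn powr_power[of "real n" "1 - 1/alpha" 2] by simp
        also have "\<dots> = real n powr (2 * (1 - 1/alpha) - 1)" by (rule powr_diff[symmetric])
        also have "2 * (1 - 1/alpha) - 1 = 1 - 2/alpha" by (simp add: field_simps)
        finally show ?thesis .
      qed
      finally show ?thesis .
    qed
    have R12: "cmod (R12 alpha p n t) \<le> K2 * (t^2 * real n powr (1 - 2/alpha))"
      using R12_bound[OF p a0 alpha(2) n, of t] unfolding K2_def by simp
    define w where "w = K * (t^2 * real n powr (1 - 2/alpha))"
    have z: "cmod (R12 alpha p n t + R32 alpha p n t) \<le> w"
    proof -
      have "cmod (R12 alpha p n t + R32 alpha p n t) \<le> (2 * K1^2 + K2) * (t^2 * real n powr (1 - 2/alpha))"
      proof -
        have "cmod (R12 alpha p n t + R32 alpha p n t) \<le> K2 * (t^2 * real n powr (1 - 2/alpha)) + 2 * K1^2 * (t^2 * real n powr (1 - 2/alpha))"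
          using norm_triangle_ineq[of "R12 alpha p n t" "R32 alpha p n t"] R12 R32 by linarith
        then show ?thesis by (simp only: distrib_right)
      qed
      also have "\<dots> \<le> w" unfolding w_def using K nn by (intro mult_right_mono) auto
      finally show ?thesis .
    qed
    have wB: "w \<le> C1 * \<bar>t\<bar> powr alpha / 2"
    proof (cases "t = 0")
      case True then show ?thesis by (simp add: w_def)
    next
      case False
      then have tp: "\<bar>t\<bar> > 0" by simp
      have "t^2 = \<bar>t\<bar> powr alpha * \<bar>t\<bar> powr (2 - alpha)"
        using tp by (simp add: powr_add[symmetric] flip: powr_realpow)
      also have "\<dots> \<le> \<bar>t\<bar> powr alpha * (\<epsilon> * real n powr (1/alpha)) powr (2 - alpha)"
        using t alpha tp by (intro mult_left_mono powr_mono2) auto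
      also have "\<dots> = \<bar>t\<bar> powr alpha * \<epsilon> powr (2 - alpha) * real n powr ((2 - alpha) / alpha)"
        using \<epsilon> nn by (simp add: powr_mult powr_powr)
      finally have tt: "t^2 \<le> \<bar>t\<bar> powr alpha * \<epsilon> powr (2 - alpha) * real n powr ((2 - alpha) / alpha)" .
      have eq: "real n powr ((2 - alpha) / alpha) * real n powr (1 - 2/alpha) = 1"
        using nn alpha by (simp add: powr_add[symmetric] diff_divide_distrib)
      have "t^2 * real n powr (1 - 2/alpha) \<le>
          \<bar>t\<bar> powr alpha * \<epsilon> powr (2 - alpha) * (real n powr ((2 - alpha) / alpha) * real n powr (1 - 2/alpha))"
        using mult_right_mono[OF tt, of "real n powr (1 - 2/alpha)"] by (simp add: mult.assoc)
      then have "t^2 * real n powr (1 - 2/alpha) \<le> \<bar>t\<bar> powr alpha * \<epsilon> powr (2 - alpha)"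
        unfolding eq by simp
      also have "\<dots> \<le> \<bar>t\<bar> powr alpha * (C1 / (2 * K))"
        using mult_left_mono[OF \<epsilon>a powr_ge_zero] .
      finally have "t^2 * real n powr (1 - 2/alpha) \<le> \<bar>t\<bar> powr alpha * (C1 / (2 * K))" .
      then have "w \<le> K * (\<bar>t\<bar> powr alpha * (C1 / (2 * K)))"
        unfolding w_def using K by (metis less_imp_le mult_left_mono)
      also have "\<dots> = C1 * \<bar>t\<bar> powr alpha / 2" using K by (simp add: field_simps)
      finally show ?thesis .
    qed
    have "cmod (R2 alpha p n l t) \<le> w ^ l * exp (C1 * \<bar>t\<bar> powr alpha / 2)"
      by (rule R2_le[OF z wB])
    also have "w ^ l = K ^ l * \<bar>t\<bar> powr (2 * real l) * real n powr (- real l * (2 - alpha) / alpha)"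
    proof -
      have "(t^2)^l = \<bar>t\<bar> powr (2 * real l)"
        using pow_powr[of "\<bar>t\<bar>" l 2] l by (simp add: mult.commute)
      moreover have "(real n powr (1 - 2/alpha))^l = real n powr (- real l * (2 - alpha) / alpha)"
        using pow_powr[of "real n" l "1 - 2/alpha"] l nn alpha by (simp add: field_simps)
      ultimately show ?thesis unfolding w_def by (simp add: power_mult_distrib)
    qed
    finally show "cmod (R2 alpha p n l t) \<le> K ^ l * \<bar>t\<bar> powr (2 * real l) * exp (C1 * \<bar>t\<bar> powr alpha / 2) * real n powr (- real l * (2 - alpha) / alpha)"
      by (simp add: mult_ac)
  qed
qed


theorem lemma6:
  fixes l :: nat and alpha p C1 C2 :: real
  assumes l: "l \<ge> 1"
    and alpha: "(0 < alpha \<and> alpha < 1) \<or> (1 < alpha \<and> alpha < 2)"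
    and p: "0 < p" "p < 1"
    and C1pos: "C1 > 0"
    and C1: "\<And>g t. qq p < g \<Longrightarrow> g \<le> 1 \<Longrightarrow>
               Re (ygam alpha p g t) \<le> - C1 * \<bar>t\<bar> powr alpha \<and>
               cmod (ygam alpha p g t) \<le> C1 * \<bar>t\<bar> powr alpha"
    and C2pos: "C2 > 0"
    and C2: "\<And>n t. n \<ge> 1 \<Longrightarrow> \<bar>t\<bar> \<le> C2 * real n powr (1 / alpha) \<Longrightarrow>
               cmod (xn alpha p n t) / real n \<le> 1 / 2"
  shows "\<exists>C4 > 0. \<exists>\<epsilon>. 0 < \<epsilon> \<and> \<epsilon> \<le> C2 \<and>
           (\<forall>n t. n \<ge> 1 \<longrightarrow> \<bar>t\<bar> \<le> \<epsilon> * real n powr (1 / alpha) \<longrightarrow>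
              cmod (R2 alpha p n l t) \<le>
                (if alpha < 1
                 then C4 * \<bar>t\<bar> powr (2 * real l * alpha) * exp (C1 * \<bar>t\<bar> powr alpha / 2)
                        * real n powr (- real l)
                 else C4 * \<bar>t\<bar> powr (2 * real l) * exp (C1 * \<bar>t\<bar> powr alpha / 2)
                        * real n powr (- real l * (2 - alpha) / alpha)))"
proof (cases "alpha < 1")
  case True
  then have a: "0 < alpha" "alpha < 1" using alpha by auto
  have "\<not> alpha \<ge> 1" using True by simp
  from main_small[OF l a p C1pos C2pos C2] show ?thesis unfolding if_P[OF True] .
next
  case False
  then have a: "1 < alpha" "alpha < 2" using alpha by auto
  from main_large[OF l a p C1pos C2pos C2] show ?thesis unfolding if_not_P[OF False] .
qed


end
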